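(* Let $0\le k\le n$ and let quadratic-form data be given: $h\in\mathbb F_2^n$, linearly independent $v_1,\dots,v_k\in\mathbb F_2^n$, $d\in\mathbb F_2^k$, an upper-triangular $J\in\mathbb F_2^{k\times k}$, and a nonzero $\gamma\in\mathbb C$. Run the following procedure. Set $a_t=d_t+2J_{tt}\in\mathbb Z_4$ and let $B\in\mathbb F_2^{k\times k}$ be the symmetric zero-diagonal matrix with $B_{ij}=J_{ij}$ for $i<j$, $B_{ij}=J_{ji}$ for $i>j$. Create tables $A,V,C$ of length $2^k$ initialized to $0$ and set $A[2^{t-1}]=a_t$, $V[2^{t-1}]=v_t$, $C[2^{t-1}]=$ the $t$-th column of $B$ ($t=1,\dots,k$). Initialize a complex array $\psi$ of length $2^n$ to zero, set $y\gets 0\in\mathbb F_2^k$, $x\gets h$, $p\gets 0\in\mathbb F_2^k$, $q\gets 0\in\mathbb Z_4$, and $\psi_x\gets\gamma$. For $m=1,\dots,2^k-1$: let $f\gets m\,\&\,(-m)$; if $(y\,\&\,f)=0$ set $q\gets q+A[f]+2\cdot\mathbf 1[(p\,\&\,f)\neq 0]\pmod 4$, otherwise set $q\gets q-A[f]+2\cdot\mathbf 1[(p\,\&\,f)\neq 0]\pmod 4$; then set $y\gets y\oplus f$, $x\gets x\oplus V[f]$, $p\gets p\oplus C[f]$, and $\psi_x\gets\gamma\,\mathrm i^{q}$. Return $\psi$. Then the returned array is exactly the amplitude vector $(\psi_x)_{x\in\mathbb F_2^n}$ with \[ \psi_{h\oplus\sum_{t=1}^k y_t v_t}=\gamma\,\mathrm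 i^{d^\top y}(-1)^{y^\top J y}\quad\text{for all } y\in\mathbb F_2^k, \] and $\psi_x=0$ for all $x\notin h+\operatorname{span}\{v_1,\dots,v_k\}$.
   Context: $\mathbb F_2=\{0,1\}$, $\oplus$ is XOR. A $k$-bit vector $y\in\mathbb F_2^k$ is encoded as the integer $\sum_{t=1}^k y_t 2^{t-1}$ (coordinate $t$ is the bit of value $2^{t-1}$); similarly for $n$-bit vectors, which index the array $\psi$. $\&$ is bitwise AND on these integers, $-m$ is two's-complement negation so that $m\,\&\,(-m)$ is the lowest set bit of $m$, and $\mathbf 1[\cdot]$ is the indicator. In the exponents $d^\top y$ and $y^\top Jy$, bits are treated as integers with ordinary integer products; $\mathrm i^{q}$ depends only on $q$ mod $4$. This data (a quadratic-form description) describes an $n$-qubit stabilizer state with support the affine space $h+\operatorname{span}\{v_1,\dots,v_k\}$. *)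

theory Defs
  imports Complex_Main
begin

unbundle bit_operations_syntax

text \<open>Vectors in F_2^n are encoded as natural numbers (bit t-1 = coordinate t).
  The coefficient vector d and matrix J are given coordinatewise (indices 1..k),
  with entries in F_2 represented as bool.\<close>

definition lowbit :: "nat \<Rightarrow> nat" where
  "lowbit m = nat (int m AND - int m)"

definition combo :: "nat \<Rightarrow> (nat \<Rightarrow> nat) \<Rightarrow> nat \<Rightarrow> nat" where
  "combo k v y = foldr (\<lambda>t acc. (if bit y (t - 1) then v t else 0) XOR acc) [1..<k+1] 0"

definition lin_indep_F2 :: "nat \<Rightarrow> (nat \<Rightarrow> nat) \<Rightarrow> bool" where
  "lin_indep_F2 k v \<longleftrightarrow> (\<forall>y < 2^k. y \<noteq> 0 \<longrightarrow> combo k v y \<noteq> 0)"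

definition Bmat :: "(nat \<Rightarrow> nat \<Rightarrow> bool) \<Rightarrow> nat \<Rightarrow> nat \<Rightarrow> bool" where
  "Bmat J i j = (if i < j then J i j else if j < i then J j i else False)"

definition Bcol :: "nat \<Rightarrow> (nat \<Rightarrow> nat \<Rightarrow> bool) \<Rightarrow> nat \<Rightarrow> nat" where
  "Bcol k J t = (\<Sum>i=1..k. of_bool (Bmat J i t) * 2^(i - 1))"

definition tableA :: "nat \<Rightarrow> (nat \<Rightarrow> bool) \<Rightarrow> (nat \<Rightarrow> nat \<Rightarrow> bool) \<Rightarrow> int list" where
  "tableA k d J = foldl (\<lambda>A t. A[2^(t-1) := (of_bool (d t) + 2 * of_bool (J t t)) mod 4])
      (replicate (2^k) 0) [1..<k+1]"

definition tableV :: "nat \<Rightarrow> (nat \<Rightarrow> nat) \<Rightarrow> nat list" where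
  "tableV k v = foldl (\<lambda>V t. V[2^(t-1) := v t]) (replicate (2^k) 0) [1..<k+1]"

definition tableC :: "nat \<Rightarrow> (nat \<Rightarrow> nat \<Rightarrow> bool) \<Rightarrow> nat list" where
  "tableC k J = foldl (\<lambda>C t. C[2^(t-1) := Bcol k J t]) (replicate (2^k) 0) [1..<k+1]"

type_synonym state = "nat \<times> nat \<times> nat \<times> int \<times> complex list"

definition step :: "int list \<Rightarrow> nat list \<Rightarrow> nat list \<Rightarrow> complex \<Rightarrow> state \<Rightarrow> nat \<Rightarrow> state" where
  "step A V C \<gamma> s m = (case s of (y, x, p, q, \<psi>) \<Rightarrow>
     let f = lowbit m;
         q' = (if y AND f = 0
               then (q + A ! f + 2 * of_bool (p AND f \<noteq> 0)) mod 4
               else (q - A ! f + 2 * of_bool (p AND f \<noteq> 0)) mod 4);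
         y' = y XOR f;
         x' = x XOR (V ! f);
         p' = p XOR (C ! f)
     in (y', x', p', q', \<psi>[x' := \<gamma> * \<i> ^ nat q']))"

definition run :: "nat \<Rightarrow> nat \<Rightarrow> nat \<Rightarrow> (nat \<Rightarrow> nat) \<Rightarrow> (nat \<Rightarrow> bool)
    \<Rightarrow> (nat \<Rightarrow> nat \<Rightarrow> bool) \<Rightarrow> complex \<Rightarrow> complex list" where
  "run n k h v d J \<gamma> =
     (let A = tableA k d J; V = tableV k v; C = tableC k J;
          s0 = (0, h, 0, 0, (replicate (2^n) 0)[h := \<gamma>]) :: state
      in snd (snd (snd (snd (foldl (step A V C \<gamma>) s0 [1..<2^k])))))"

end

theory Submission
  imports Defs
begin

unbundle bit_operations_syntax


lemma bit_small: "(a::nat) < 2^c \<Longrightarrow> bit a i \<Longrightarrow> i < c"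
  by (metis bit_take_bit_iff take_bit_nat_eq_self_iff)

lemma xor_less: "(a::nat) < 2^k \<Longrightarrow> b < 2^k \<Longrightarrow> a XOR b < 2^k"
  by (metis take_bit_nat_eq_self_iff take_bit_xor)

lemma bit_split: "(a::nat) < 2^c \<Longrightarrow> bit (2^c * j + a) i \<longleftrightarrow> (if i < c then bit a i else bit j (i - c))"
proof -
  assume a: "a < 2^c"
  have e: "2^c * j = push_bit c j" by (simp add: push_bit_eq_mult)
  have "bit (push_bit c j + a) i \<longleftrightarrow> bit (push_bit c j) i \<or> bit a i"
    by (rule bit_disjunctive_add_iff) (auto simp: bit_push_bit_iff dest: bit_small[OF a])
  then show ?thesis using e bit_small[OF a, of i] by (auto simp: bit_push_bit_iff)
qed

lemma bit_mask_nat: "bit ((2::nat)^s - 1) i \<longleftrightarrow> i < s"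
  by (metis bit_mask_iff mask_eq_exp_minus_1 possible_bit_nat)

lemma bit_mask_nat': "bit ((2::nat)^s - Suc 0) i \<longleftrightarrow> i < s"
  using bit_mask_nat by simp

lemma bits_m: "bit ((2::nat)^s * (2*j+1)) i \<longleftrightarrow> i = s \<or> (s < i \<and> bit j (i - s - 1))"
proof -
  have eq: "(2::nat)^s * (2*j+1) = 2^(Suc s) * j + 2^s" by simp
  have "bit ((2::nat)^(Suc s) * j + 2^s) i \<longleftrightarrow> i = s \<or> (s < i \<and> bit j (i - s - 1))"
    by (subst bit_split) (auto simp: bit_exp_iff)
  then show ?thesis by (simp only: eq)
qed

lemma bits_m1: "bit ((2::nat)^s * (2*j+1) - 1) i \<longleftrightarrow> i < s \<or> (s < i \<and> bit j (i - s - 1))"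
proof -
  have eq: "(2::nat)^s * (2*j+1) - 1 = 2^(Suc s) * j + (2^s - 1)" by simp
  have lt: "(2::nat)^s - 1 < 2^Suc s" by (simp add: less_imp_diff_less)
  have "bit ((2::nat)^(Suc s) * j + (2^s - 1)) i \<longleftrightarrow> i < s \<or> (s < i \<and> bit j (i - s - 1))"
    by (subst bit_split[OF lt]) (auto simp: bit_mask_nat bit_mask_nat')
  then show ?thesis by (simp only: eq)
qed

lemma factor2: "(m::nat) > 0 \<Longrightarrow> \<exists>s j. m = 2^s * (2*j+1)"
proof (induction m rule: less_induct)
  case (less m)
  show ?case
  proof (cases "even m")
    case True
    then obtain m' where m': "m = 2*m'" by auto
    with less.prems have "m' < m" "m' > 0" by auto
    with less.IH obtain s j where "m' = 2^s*(2*j+1)" by blast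
    with m' have "m = 2^(Suc s)*(2*j+1)" by simp
    then show ?thesis by blast
  next
    case False
    then obtain j where "m = 2*j+1" by (metis oddE)
    then have "m = 2^0*(2*j+1)" by simp
    then show ?thesis by blast
  qed
qed

lemma lowbit_eq: assumes mdef: "m = (2::nat)^s * (2*j+1)" shows "lowbit m = 2^s"
proof -
  have mpos: "m > 0" by (simp add: mdef)
  have A: "bit m i \<longleftrightarrow> i = s \<or> (s < i \<and> bit j (i - s - 1))" for i using bits_m mdef by simp
  have B: "bit (m - 1) i \<longleftrightarrow> i < s \<or> (s < i \<and> bit j (i - s - 1))" for i using bits_m1 mdef by simp
  have B': "bit (m - Suc 0) i \<longleftrightarrow> i < s \<or> (s < i \<and> bit j (i - s - 1))" for i using B by simp
  have "int m AND - int m = 2^s"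
  proof (rule bit_eqI)
    fix i
    have "bit (- int m) i \<longleftrightarrow> \<not> bit (int m - 1) i" by (simp add: bit_minus_int_iff bit_not_iff)
    also have "int m - 1 = int (m - 1)" using mpos by simp
    finally have "bit (- int m) i \<longleftrightarrow> \<not> bit (m - 1) i" by (simp add: bit_of_nat_iff_bit)
    then show "bit (int m AND - int m) i \<longleftrightarrow> bit ((2::int)^s) i"
      by (auto simp: bit_and_iff bit_of_nat_iff_bit A B B' bit_exp_iff)
  qed
  then show ?thesis unfolding lowbit_def by simp
qed

definition gray :: "nat \<Rightarrow> nat" where "gray m = m XOR (m div 2)"

lemma bit_gray: "bit (gray m) i \<longleftrightarrow> bit m i \<noteq> bit m (Suc i)"
  by (simp add: gray_def bit_xor_iff bit_Suc)

lemma gray_step: assumes mdef: "m = (2::nat)^s * (2*j+1)" shows "gray m = gray (m - 1) XOR 2^s"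
proof -
  have A: "bit m i \<longleftrightarrow> i = s \<or> (s < i \<and> bit j (i - s - 1))" for i using bits_m mdef by simp
  have B: "bit (m - 1) i \<longleftrightarrow> i < s \<or> (s < i \<and> bit j (i - s - 1))" for i using bits_m1 mdef by simp
  show ?thesis
    apply (rule bit_eqI)
    apply (simp only: bit_gray bit_xor_iff A B bit_exp_iff possible_bit_nat)
    by auto
qed

lemma gray_inj: "gray a = gray b \<Longrightarrow> a = b"
proof -
  assume g: "gray a = gray b"
  define c where "c = a XOR b"
  have "a XOR b = (a div 2) XOR (b div 2)" using g unfolding gray_def
    by (metis xor.assoc xor.commute xor.left_commute xor_self_eq xor.right_neutral)
  moreover have "(a XOR b) div 2 = (a div 2) XOR (b div 2)"
    using drop_bit_xor[of 1 a b] by (simp add: drop_bit_eq_div)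
  ultimately have "c = c div 2" unfolding c_def by simp
  then have "c = 0" by linarith
  then have "(a XOR b) XOR b = b" unfolding c_def by simp
  then show ?thesis by (simp add: xor.assoc)
qed

lemma gray_less: "m < 2^k \<Longrightarrow> gray m < 2^k"
  unfolding gray_def by (rule xor_less) auto

lemma gray_surj: "y < 2^k \<Longrightarrow> \<exists>m < 2^k. gray m = y"
proof -
  assume y: "y < 2^k"
  have inj: "inj_on gray {..<(2::nat)^k}" by (auto intro: inj_onI gray_inj)
  have "gray ` {..<(2::nat)^k} \<subseteq> {..<2^k}" using gray_less by auto
  then have "gray ` {..<(2::nat)^k} = {..<2^k}"
    using inj by (simp add: card_image card_subset_eq)
  with y show ?thesis by (metis imageE lessThan_iff)
qed


lemma foldr_xor_acc: "foldr (\<lambda>t acc. (c t :: nat) XOR acc) xs a = foldr (\<lambda>t acc. c t XOR acc) xs 0 XOR a"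
  by (induction xs) (simp_all add: xor.assoc)

lemma combo_0[simp]: "combo 0 v y = 0"
  by (simp add: combo_def)

lemma combo_Suc: "combo (Suc k) v y = combo k v y XOR (if bit y k then v (Suc k) else 0)"
proof -
  have "[1..<Suc k + 1] = [1..<k+1] @ [Suc k]" by simp
  then show ?thesis unfolding combo_def
    by (simp only: foldr_append) (subst foldr_xor_acc, simp)
qed

lemma combo_xor: "combo k v (a XOR b) = combo k v a XOR combo k v b"
proof (induction k)
  case 0 then show ?case by simp
next
  case (Suc k)
  have e: "(if bit (a XOR b) k then v (Suc k) else 0) = (if bit a k then v (Suc k) else 0) XOR (if bit b k then v (Suc k) else 0)"
    by (simp add: bit_xor_iff)
  show ?case unfolding combo_Suc Suc e by (simp add: xor.assoc xor.left_commute)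
qed

lemma combo_lowzero: "(\<forall>i<k. \<not> bit y i) \<Longrightarrow> combo k v y = 0"
  by (induction k) (simp_all add: combo_Suc)

lemma combo_pow: "1 \<le> t \<Longrightarrow> t \<le> k \<Longrightarrow> combo k v (2^(t-1)) = v t"
proof (induction k)
  case 0 then show ?case by simp
next
  case (Suc k)
  show ?case
  proof (cases "t = Suc k")
    case True
    have "combo k v (2^(t-1)) = 0" by (rule combo_lowzero) (simp add: bit_exp_iff True)
    then show ?thesis by (simp add: combo_Suc True bit_exp_iff)
  next
    case False
    then have "t \<le> k" using Suc.prems by simp
    then show ?thesis using Suc by (auto simp add: combo_Suc bit_exp_iff)
  qed
qed

lemma combo_less: "(\<forall>t\<in>{1..k}. v t < 2^n) \<Longrightarrow> combo k v y < 2^n"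
proof (induction k)
  case 0 then show ?case by simp
next
  case (Suc k)
  then show ?case by (auto simp: combo_Suc intro!: xor_less)
qed

lemma combo_parity: "bit (combo k w y) b \<longleftrightarrow> odd (\<Sum>i=1..k. of_bool (bit y (i-1) \<and> bit (w i) b) :: nat)"
proof (induction k)
  case 0 then show ?case by simp
next
  case (Suc k)
  show ?case by (simp add: combo_Suc bit_xor_iff Suc)
qed

lemma combo_inj: assumes "lin_indep_F2 k v" "a < 2^k" "b < 2^k" "combo k v a = combo k v b" shows "a = b"
proof (rule ccontr)
  assume "a \<noteq> b"
  then have ne: "a XOR b \<noteq> 0" by (metis xor_self_eq xor.assoc xor.left_neutral xor.comm_neutral)
  have "a XOR b < 2^k" using assms by (simp add: xor_less)
  then have "combo k v (a XOR b) \<noteq> 0" using assms(1) ne unfolding lin_indep_F2_def by blast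
  then show False using assms(4) by (simp add: combo_xor)
qed

lemma powsum_bits: "(\<Sum>i=1..k. of_bool (P i) * 2^(i-1) :: nat) < 2^k \<and>
   (\<forall>b. bit (\<Sum>i=1..k. of_bool (P i) * 2^(i-1) :: nat) b \<longleftrightarrow> b < k \<and> P (Suc b))"
proof (induction k)
  case 0 then show ?case by simp
next
  case (Suc k)
  define S where "S = (\<Sum>i=1..k. of_bool (P i) * 2^(i-1) :: nat)"
  have S: "S < 2^k" "\<And>b. bit S b \<longleftrightarrow> b < k \<and> P (Suc b)" using Suc unfolding S_def by auto
  have e: "(\<Sum>i=1..Suc k. of_bool (P i) * 2^(i-1) :: nat) = 2^k * of_bool (P (Suc k)) + S"
    unfolding S_def sum.cl_ivl_Suc by (simp add: mult.commute)
  have "2^k * of_bool (P (Suc k)) + S < 2^Suc k" using S(1) by (cases "P (Suc k)") auto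
  moreover have "bit (2^k * of_bool (P (Suc k)) + S) b \<longleftrightarrow> b < Suc k \<and> P (Suc b)" for b
  proof -
    have "bit (2^k * of_bool (P (Suc k)) + S) b \<longleftrightarrow> (if b < k then bit S b else bit (of_bool (P (Suc k)) :: nat) (b - k))"
      by (rule bit_split[OF S(1)])
    then show ?thesis using S(2)[of b] by (auto simp: bit_of_bool_iff less_Suc_eq)
  qed
  ultimately show ?case unfolding e by blast
qed

lemma bit_Bcol: "bit (Bcol k J t) b \<longleftrightarrow> b < k \<and> Bmat J (Suc b) t"
  unfolding Bcol_def using powsum_bits[where k=k and P="\<lambda>i. Bmat J i t"] by blast

lemma Bmat_sym: "Bmat J i t = Bmat J t i"
  by (auto simp: Bmat_def)

lemma fold_tab_len: "length (foldl (\<lambda>A t. A[2^(t-1) := F t]) L xs) = length L"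
  by (induction xs arbitrary: L) auto

lemma fold_tab_other: "(\<forall>t\<in>set xs. 2^(t-1) \<noteq> i) \<Longrightarrow> foldl (\<lambda>A t. A[(2::nat)^(t-1) := F t]) L xs ! i = L ! i"
  by (induction xs arbitrary: L) auto

lemma fold_tab_nth: "\<forall>t\<in>set xs. 1 \<le> t \<Longrightarrow> distinct xs \<Longrightarrow> t \<in> set xs \<Longrightarrow> 2^(t-1) < length L \<Longrightarrow>
   foldl (\<lambda>A t. A[(2::nat)^(t-1) := F t]) L xs ! (2^(t-1)) = F t"
proof (induction xs arbitrary: L)
  case Nil then show ?case by simp
next
  case (Cons a xs)
  show ?case
  proof (cases "t \<in> set xs")
    case True then show ?thesis using Cons by simp
  next
    case False
    then have ta: "t = a" using Cons.prems by simp
    have "\<forall>t'\<in>set xs. (2::nat)^(t'-1) \<noteq> 2^(a-1)"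
    proof
      fix t' assume t': "t' \<in> set xs"
      show "(2::nat)^(t'-1) \<noteq> 2^(a-1)"
      proof
        assume "(2::nat)^(t'-1) = 2^(a-1)"
        then have "t' - 1 = a - 1" by simp
        then have "t' = a" using Cons.prems t' by auto
        then show False using Cons.prems(2) t' by simp
      qed
    qed
    then have "foldl (\<lambda>A t. A[(2::nat)^(t-1) := F t]) (L[2^(a-1) := F a]) xs ! (2^(a-1)) = (L[2^(a-1) := F a]) ! (2^(a-1))"
      by (rule fold_tab_other)
    then show ?thesis using Cons.prems ta by simp
  qed
qed

lemma tab_nth: assumes "1 \<le> t" "t \<le> k"
  shows "foldl (\<lambda>A t. A[(2::nat)^(t-1) := F t]) (replicate (2^k) z) [1..<k+1] ! (2^(t-1)) = F t"
proof (rule fold_tab_nth)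
  show "2^(t-1) < length (replicate (2^k) z)" using assms by simp
qed (use assms in auto)

lemma tableA_nth: "1 \<le> t \<Longrightarrow> t \<le> k \<Longrightarrow> tableA k d J ! (2^(t-1)) = (of_bool (d t) + 2 * of_bool (J t t)) mod 4"
  unfolding tableA_def by (rule tab_nth)
lemma tableV_nth: "1 \<le> t \<Longrightarrow> t \<le> k \<Longrightarrow> tableV k v ! (2^(t-1)) = v t"
  unfolding tableV_def by (rule tab_nth)
lemma tableC_nth: "1 \<le> t \<Longrightarrow> t \<le> k \<Longrightarrow> tableC k J ! (2^(t-1)) = Bcol k J t"
  unfolding tableC_def by (rule tab_nth)



definition E1 :: "nat \<Rightarrow> (nat \<Rightarrow> bool) \<Rightarrow> nat \<Rightarrow> nat" where
  "E1 k d y = (\<Sum>t=1..k. of_bool (d t \<and> bit y (t - 1)))"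
definition E2 :: "nat \<Rightarrow> (nat \<Rightarrow> nat \<Rightarrow> bool) \<Rightarrow> nat \<Rightarrow> nat" where
  "E2 k J y = (\<Sum>i=1..k. \<Sum>j=1..k. of_bool (bit y (i - 1) \<and> J i j \<and> bit y (j - 1)))"

lemma E1_flip: assumes t: "t \<in> {1..k}" and nb: "\<not> bit y (t-1)"
  shows "E1 k d (y XOR 2^(t-1)) = E1 k d y + of_bool (d t)"
proof -
  have pw: "of_bool (d i \<and> bit (y XOR 2^(t-1)) (i - 1)) = of_bool (d i \<and> bit y (i - 1)) + (if i = t then of_bool (d t) else (0::nat))"
    if "i \<in> {1..k}" for i
    using that t nb by (auto simp: bit_xor_iff bit_exp_iff)
  have "E1 k d (y XOR 2^(t-1)) = (\<Sum>i=1..k. of_bool (d i \<and> bit y (i - 1)) + (if i = t then of_bool (d t) else (0::nat)))"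
    unfolding E1_def by (rule sum.cong[OF refl pw])
  also have "\<dots> = E1 k d y + of_bool (d t)"
    unfolding E1_def sum.distrib using t by (simp add: sum.delta)
  finally show ?thesis .
qed

lemma E2_flip: assumes t: "t \<in> {1..k}" and nb: "\<not> bit y (t-1)"
  and tri: "\<forall>i\<in>{1..k}. \<forall>j\<in>{1..k}. j < i \<longrightarrow> \<not> J i j"
  shows "E2 k J (y XOR 2^(t-1)) = E2 k J y + of_bool (J t t) + (\<Sum>i=1..k. of_bool (bit y (i-1) \<and> Bmat J i t))"
proof -
  define P where "P i = bit y (i - 1)" for i
  define P' where "P' i = bit (y XOR 2^(t-1)) (i - 1)" for i
  have P': "P' i \<longleftrightarrow> P i \<or> i = t" if "i \<in> {1..k}" for i
    using that t nb unfolding P_def P'_def by (auto simp: bit_xor_iff bit_exp_iff)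
  have Pt: "\<not> P t" using nb P_def by simp
  have pw: "of_bool (P' i \<and> J i j \<and> P' j) = of_bool (P i \<and> J i j \<and> P j)
      + (if i = t then of_bool (J t j \<and> P' j) else 0) + (if j = t then of_bool (P i \<and> J i t) else (0::nat))"
    if "i \<in> {1..k}" "j \<in> {1..k}" for i j
    using P'[OF that(1)] P'[OF that(2)] Pt by auto
  have "E2 k J (y XOR 2^(t-1)) = (\<Sum>i=1..k. \<Sum>j=1..k. of_bool (P i \<and> J i j \<and> P j)
      + (if i = t then of_bool (J t j \<and> P' j) else 0) + (if j = t then of_bool (P i \<and> J i t) else (0::nat)))"
    unfolding E2_def P'_def[symmetric] using pw by (intro sum.cong refl) auto
  also have "\<dots> = E2 k J y + (\<Sum>j=1..k. of_bool (J t j \<and> P' j)) + (\<Sum>i=1..k. of_bool (P i \<and> J i t))"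
  proof -
    have a: "(\<Sum>i=1..k. \<Sum>j=1..k. (if i = t then of_bool (J t j \<and> P' j) else (0::nat))) = (\<Sum>j=1..k. of_bool (J t j \<and> P' j))"
    proof -
      have "(\<Sum>i=1..k. \<Sum>j=1..k. (if i = t then of_bool (J t j \<and> P' j) else (0::nat)))
          = (\<Sum>i=1..k. (if i = t then (\<Sum>j=1..k. of_bool (J t j \<and> P' j)) else (0::nat)))"
        by (intro sum.cong refl) auto
      also have "\<dots> = (\<Sum>j=1..k. of_bool (J t j \<and> P' j))" using t by (simp only: sum.delta finite_atLeastAtMost) simp
      finally show ?thesis .
    qed
    have b: "(\<Sum>i=1..k. \<Sum>j=1..k. (if j = t then of_bool (P i \<and> J i t) else (0::nat))) = (\<Sum>i=1..k. of_bool (P i \<and> J i t))"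
      using t by (intro sum.cong refl) (simp only: sum.delta finite_atLeastAtMost, simp)
    show ?thesis unfolding sum.distrib a b unfolding E2_def P_def by simp
  qed
  also have "(\<Sum>j=1..k. of_bool (J t j \<and> P' j)) = (\<Sum>j=1..k. of_bool (J t j \<and> P j) + (if j = t then of_bool (J t t) else (0::nat)))"
    using P' Pt by (intro sum.cong refl) auto
  also have "\<dots> = (\<Sum>j=1..k. of_bool (J t j \<and> P j)) + of_bool (J t t)"
    using t by (simp add: sum.distrib sum.delta)
  also have "(\<Sum>j=1..k. of_bool (J t j \<and> P j)) + (\<Sum>i=1..k. of_bool (P i \<and> J i t)) = (\<Sum>i=1..k. of_bool (P i \<and> Bmat J i t) :: nat)"
    unfolding sum.distrib[symmetric]
  proof (intro sum.cong refl)
    fix i assume i: "i \<in> {1..k}"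
    show "of_bool (J t i \<and> P i) + of_bool (P i \<and> J i t) = (of_bool (P i \<and> Bmat J i t) :: nat)"
    proof (cases "P i")
      case True
      then have "i \<noteq> t" using Pt by auto
      then show ?thesis using tri i t True by (cases "i < t") (auto simp: Bmat_def)
    qed simp
  qed
  ultimately show ?thesis unfolding P_def by simp
qed


lemma S2: "2 * S = 2 * of_bool (odd S) + 4 * (S div 2)" for S :: int
  by (cases "odd S") (auto elim!: oddE evenE)
lemma qadd: "(x mod 4 + a mod 4 + 2 * of_bool (odd S)) mod 4 = (x + a + 2 * S) mod (4::int)"
proof -
  have "x + a + 2 * S = (x mod 4 + a mod 4 + 2 * of_bool (odd S)) + 4 * (x div 4 + a div 4 + S div 2)"
    using S2[of S] div_mult_mod_eq[of x 4] div_mult_mod_eq[of a 4] by (smt (verit))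
  then have "(x + a + 2 * S) mod 4 = ((x mod 4 + a mod 4 + 2 * of_bool (odd S)) + 4 * (x div 4 + a div 4 + S div 2)) mod 4"
    by (rule arg_cong)
  then show ?thesis by (simp only: mod_mult_self2)
qed
lemma qsub: "((x + a + 2 * S) mod 4 - a mod 4 + 2 * of_bool (odd S)) mod 4 = x mod (4::int)"
proof -
  have "x = ((x + a + 2 * S) mod 4 - a mod 4 + 2 * of_bool (odd S)) + 4 * ((x + a + 2*S) div 4 - a div 4 - S div 2 - of_bool (odd S))"
    using S2[of S] div_mult_mod_eq[of "x + a + 2*S" 4] div_mult_mod_eq[of a 4] by (smt (verit))
  then have "x mod 4 = (((x + a + 2 * S) mod 4 - a mod 4 + 2 * of_bool (odd S)) + 4 * ((x + a + 2*S) div 4 - a div 4 - S div 2 - of_bool (odd S))) mod 4"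
    by simp
  then show ?thesis by (simp only: mod_mult_self2)
qed
lemma ipow: "\<i> ^ (n mod 4) = \<i> ^ n"
proof -
  have "\<i> ^ n = \<i> ^ (4 * (n div 4) + n mod 4)" by simp
  also have "\<dots> = (\<i>^4) ^ (n div 4) * \<i> ^ (n mod 4)" by (simp only: power_add power_mult)
  finally show ?thesis by simp
qed

definition Eq4 :: "nat \<Rightarrow> (nat \<Rightarrow> bool) \<Rightarrow> (nat \<Rightarrow> nat \<Rightarrow> bool) \<Rightarrow> nat \<Rightarrow> nat" where
  "Eq4 k d J y = E1 k d y + 2 * E2 k J y"

definition invS :: "nat \<Rightarrow> nat \<Rightarrow> nat \<Rightarrow> (nat \<Rightarrow> nat) \<Rightarrow> (nat \<Rightarrow> bool) \<Rightarrow> (nat \<Rightarrow> nat \<Rightarrow> bool) \<Rightarrow> complex \<Rightarrow> nat \<Rightarrow> state \<Rightarrow> bool" where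
  "invS n k h v d J \<gamma> M s \<longleftrightarrow> (case s of (y, x, p, q, \<psi>) \<Rightarrow>
     y = gray M \<and> x = h XOR combo k v (gray M) \<and> p = combo k (Bcol k J) (gray M)
     \<and> q = int (Eq4 k d J (gray M)) mod 4 \<and> length \<psi> = 2^n
     \<and> (\<forall>j\<le>M. \<psi> ! (h XOR combo k v (gray j)) = \<gamma> * \<i> ^ Eq4 k d J (gray j))
     \<and> (\<forall>x<2^n. (\<forall>j\<le>M. x \<noteq> h XOR combo k v (gray j)) \<longrightarrow> \<psi> ! x = 0))"

lemma Ex_flip: assumes t: "t \<in> {1..k}" and nb: "\<not> bit y (t-1)"
  and tri: "\<forall>i\<in>{1..k}. \<forall>j\<in>{1..k}. j < i \<longrightarrow> \<not> J i j"
  shows "int (Eq4 k d J (y XOR 2^(t-1))) = int (Eq4 k d J y) + (of_bool (d t) + 2 * of_bool (J t t))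
     + 2 * int (\<Sum>i=1..k. of_bool (bit y (i-1) \<and> Bmat J i t))"
  unfolding Eq4_def E1_flip[OF t nb] E2_flip[OF t nb tri] by simp

lemma Ssame: assumes t: "t \<in> {1..k}"
  shows "(\<Sum>i=1..k. of_bool (bit (y XOR 2^(t-1)) (i-1) \<and> Bmat J i t)) = (\<Sum>i=1..k. of_bool (bit y (i-1) \<and> Bmat J i t) :: nat)"
proof (intro sum.cong refl)
  fix i assume i: "i \<in> {1..k}"
  show "of_bool (bit (y XOR 2^(t-1)) (i-1) \<and> Bmat J i t) = (of_bool (bit y (i-1) \<and> Bmat J i t) :: nat)"
  proof (cases "i = t")
    case True then show ?thesis by (simp add: Bmat_def)
  next
    case False
    then have "i - 1 \<noteq> t - 1" using i t by auto
    then show ?thesis by (simp add: bit_xor_iff bit_exp_iff)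
  qed
qed

lemma invS_step:
  assumes hn: "h < 2^n" and vn: "\<forall>t\<in>{1..k}. v t < 2^n" and li: "lin_indep_F2 k v"
    and tri: "\<forall>i\<in>{1..k}. \<forall>j\<in>{1..k}. j < i \<longrightarrow> \<not> J i j"
    and M: "Suc M < 2^k" and I: "invS n k h v d J \<gamma> M s"
  shows "invS n k h v d J \<gamma> (Suc M) (step (tableA k d J) (tableV k v) (tableC k J) \<gamma> s (Suc M))"
proof -
  obtain y x p q \<psi> where s: "s = (y, x, p, q, \<psi>)" by (cases s) auto
  have y: "y = gray M" and x: "x = h XOR combo k v (gray M)" and p: "p = combo k (Bcol k J) (gray M)"
    and q: "q = int (Eq4 k d J (gray M)) mod 4" and len: "length \<psi> = 2^n"
    and old: "\<forall>j\<le>M. \<psi> ! (h XOR combo k v (gray j)) = \<gamma> * \<i> ^ Eq4 k d J (gray j)"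
    and zero: "\<forall>x<2^n. (\<forall>j\<le>M. x \<noteq> h XOR combo k v (gray j)) \<longrightarrow> \<psi> ! x = 0"
    using I unfolding invS_def s by auto
  obtain s0 j where fac: "Suc M = 2^s0 * (2*j+1)" using factor2[of "Suc M"] by auto
  have f: "lowbit (Suc M) = 2^s0" by (rule lowbit_eq[OF fac])
  have "2^s0 \<le> Suc M" using fac by simp
  then have "(2::nat)^s0 < 2^k" using M by linarith
  then have s0k: "s0 < k" by simp
  define t where "t = Suc s0"
  have t: "t \<in> {1..k}" "1 \<le> t" "t \<le> k" and t1: "t - 1 = s0" using s0k t_def by auto
  have gS: "gray (Suc M) = gray M XOR 2^s0" using gray_step[OF fac] by simp
  have Af: "tableA k d J ! (2^s0) = (of_bool (d t) + 2 * of_bool (J t t)) mod 4"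
    using tableA_nth[OF t(2,3), of d J] t1 by simp
  have Vf: "tableV k v ! (2^s0) = v t" using tableV_nth[OF t(2,3), of v] t1 by simp
  have Cf: "tableC k J ! (2^s0) = Bcol k J t" using tableC_nth[OF t(2,3), of J] t1 by simp
  have x': "x XOR v t = h XOR combo k v (gray (Suc M))"
    unfolding x gS combo_xor using combo_pow[OF t(2,3), of v] t1 by (simp add: xor.assoc)
  have p': "p XOR Bcol k J t = combo k (Bcol k J) (gray (Suc M))"
    unfolding p gS combo_xor using combo_pow[OF t(2,3), of "Bcol k J"] t1 by simp
  define S where "S = (\<Sum>i=1..k. of_bool (bit (gray M) (i-1) \<and> Bmat J i t) :: nat)"
  have pb: "(p AND 2^s0 \<noteq> 0) \<longleftrightarrow> odd S"
  proof -
    have "(p AND 2^s0 \<noteq> 0) \<longleftrightarrow> bit p s0" by (simp add: and_exp_eq_0_iff_not_bit)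
    also have "\<dots> \<longleftrightarrow> odd (\<Sum>i=1..k. of_bool (bit (gray M) (i-1) \<and> bit (Bcol k J i) s0) :: nat)"
      unfolding p by (rule combo_parity)
    also have "(\<Sum>i=1..k. of_bool (bit (gray M) (i-1) \<and> bit (Bcol k J i) s0) :: nat) = S"
      unfolding S_def bit_Bcol using s0k t_def by (intro sum.cong refl) (auto simp: Bmat_sym)
    finally show ?thesis .
  qed
  define a :: int where "a = of_bool (d t) + 2 * of_bool (J t t)"
  define q' where "q' = (if y AND 2^s0 = 0
               then (q + tableA k d J ! (2^s0) + 2 * of_bool (p AND 2^s0 \<noteq> 0)) mod 4
               else (q - tableA k d J ! (2^s0) + 2 * of_bool (p AND 2^s0 \<noteq> 0)) mod 4)"
  have q': "q' = int (Eq4 k d J (gray (Suc M))) mod 4"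
  proof (cases "bit (gray M) s0")
    case False
    have e: "int (Eq4 k d J (gray (Suc M))) = int (Eq4 k d J (gray M)) + a + 2 * int S"
      unfolding gS a_def S_def using Ex_flip[OF t(1) _ tri, of "gray M" d] False t1 by simp
    have "q' = (int (Eq4 k d J (gray M)) mod 4 + a mod 4 + 2 * of_bool (odd (int S))) mod 4"
      unfolding q'_def y q Af pb a_def using False by (simp add: and_exp_eq_0_iff_not_bit)
    also have "\<dots> = int (Eq4 k d J (gray (Suc M))) mod 4" unfolding e by (rule qadd)
    finally show ?thesis .
  next
    case True
    have gM: "gray M = gray (Suc M) XOR 2^(t-1)" unfolding gS t1 by (simp add: xor.assoc)
    have nb: "\<not> bit (gray (Suc M)) (t-1)" using True t1 gS by (simp add: bit_xor_iff bit_exp_iff)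
    have SS: "S = (\<Sum>i=1..k. of_bool (bit (gray (Suc M)) (i-1) \<and> Bmat J i t) :: nat)"
      unfolding S_def gM by (rule Ssame[OF t(1)])
    have e: "int (Eq4 k d J (gray M)) = int (Eq4 k d J (gray (Suc M))) + a + 2 * int S"
      unfolding SS a_def gM by (rule Ex_flip[OF t(1) nb tri])
    have "q' = ((int (Eq4 k d J (gray (Suc M))) + a + 2 * int S) mod 4 - a mod 4 + 2 * of_bool (odd (int S))) mod 4"
      unfolding q'_def y q Af pb a_def e[unfolded a_def] using True by (simp add: and_exp_eq_0_iff_not_bit)
    also have "\<dots> = int (Eq4 k d J (gray (Suc M))) mod 4" by (rule qsub)
    finally show ?thesis .
  qed
  have nq: "\<i> ^ nat q' = \<i> ^ Eq4 k d J (gray (Suc M))"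
    unfolding q' using ipow by (simp add: nat_mod_distrib)
  define x' where "x' = h XOR combo k v (gray (Suc M))"
  have x'n: "x' < 2^n" unfolding x'_def using hn combo_less[OF vn] by (simp add: xor_less)
  have st: "step (tableA k d J) (tableV k v) (tableC k J) \<gamma> s (Suc M)
     = (gray (Suc M), x', combo k (Bcol k J) (gray (Suc M)), q', \<psi>[x' := \<gamma> * \<i> ^ Eq4 k d J (gray (Suc M))])"
  proof -
    have "step (tableA k d J) (tableV k v) (tableC k J) \<gamma> s (Suc M)
      = (y XOR 2^s0, x XOR v t, p XOR Bcol k J t, q', \<psi>[x XOR v t := \<gamma> * \<i> ^ nat q'])"
      unfolding step_def s f Let_def Vf Cf q'_def by simp
    also have "\<dots> = (gray (Suc M), x', combo k (Bcol k J) (gray (Suc M)), q', \<psi>[x' := \<gamma> * \<i> ^ Eq4 k d J (gray (Suc M))])"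
      unfolding x' p' nq x'_def y gS by simp
    finally show ?thesis .
  qed
  have gl: "gray i < 2^k" if "i \<le> Suc M" for i using gray_less M that by simp
  show ?thesis unfolding st invS_def
  proof (simp only: prod.case, intro conjI)
    show "length (\<psi>[x' := \<gamma> * \<i> ^ Eq4 k d J (gray (Suc M))]) = 2^n" using len by simp
    show "\<forall>j\<le>Suc M. \<psi>[x' := \<gamma> * \<i> ^ Eq4 k d J (gray (Suc M))] ! (h XOR combo k v (gray j)) = \<gamma> * \<i> ^ Eq4 k d J (gray j)"
    proof (intro allI impI)
      fix j assume j: "j \<le> Suc M"
      show "\<psi>[x' := \<gamma> * \<i> ^ Eq4 k d J (gray (Suc M))] ! (h XOR combo k v (gray j)) = \<gamma> * \<i> ^ Eq4 k d J (gray j)"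
      proof (cases "h XOR combo k v (gray j) = x'")
        case True
        then have "combo k v (gray j) = combo k v (gray (Suc M))" unfolding x'_def
          by (metis xor.assoc xor_self_eq xor.left_neutral)
        then have "gray j = gray (Suc M)" using combo_inj[OF li gl[OF j] gl[OF order.refl]] by simp
        then show ?thesis using True len x'n by simp
      next
        case False
        then have "j \<noteq> Suc M" unfolding x'_def by auto
        then show ?thesis using False old j by simp
      qed
    qed
    show "\<forall>xa<2^n. (\<forall>j\<le>Suc M. xa \<noteq> h XOR combo k v (gray j)) \<longrightarrow> \<psi>[x' := \<gamma> * \<i> ^ Eq4 k d J (gray (Suc M))] ! xa = 0"
    proof (intro allI impI)
      fix xa assume xa: "xa < 2^n" and nj: "\<forall>j\<le>Suc M. xa \<noteq> h XOR combo k v (gray j)"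
      then have "xa \<noteq> x'" unfolding x'_def by blast
      moreover have "\<psi> ! xa = 0" using zero xa nj by simp
      ultimately show "\<psi>[x' := \<gamma> * \<i> ^ Eq4 k d J (gray (Suc M))] ! xa = 0" by simp
    qed
  qed (simp_all add: x'_def q')
qed

lemma Eq4_0: "Eq4 k d J 0 = 0"
  unfolding Eq4_def E1_def E2_def by simp

lemma gray_0: "gray 0 = 0" by (simp add: gray_def)

lemma invS_loop:
  assumes hn: "h < 2^n" and vn: "\<forall>t\<in>{1..k}. v t < 2^n" and li: "lin_indep_F2 k v"
    and tri: "\<forall>i\<in>{1..k}. \<forall>j\<le>k. 1 \<le> j \<longrightarrow> j < i \<longrightarrow> \<not> J i j"
  shows "M < 2^k \<Longrightarrow> invS n k h v d J \<gamma> M (foldl (step (tableA k d J) (tableV k v) (tableC k J) \<gamma>)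
           (0, h, 0, 0, (replicate (2^n) 0)[h := \<gamma>]) [1..<Suc M])"
proof (induction M)
  case 0
  have c0: "combo k w 0 = 0" for w by (rule combo_lowzero) simp
  show ?case unfolding invS_def using hn by (auto simp: gray_0 c0 Eq4_0)
next
  case (Suc M)
  have tri': "\<forall>i\<in>{1..k}. \<forall>j\<in>{1..k}. j < i \<longrightarrow> \<not> J i j" using tri by auto
  have "[1..<Suc (Suc M)] = [1..<Suc M] @ [Suc M]" by simp
  then show ?case using invS_step[OF hn vn li tri' Suc.prems] Suc by simp
qed

theorem theorem1:
  fixes n k h :: nat and v :: "nat \<Rightarrow> nat" and d :: "nat \<Rightarrow> bool"
    and J :: "nat \<Rightarrow> nat \<Rightarrow> bool" and \<gamma> :: complex
  assumes "k \<le> n"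
    and "h < 2^n"
    and "\<forall>t\<in>{1..k}. v t < 2^n"
    and "lin_indep_F2 k v"
    and "\<forall>i\<in>{1..k}. \<forall>j\<in>{1..k}. j < i \<longrightarrow> \<not> J i j"
    and "\<gamma> \<noteq> 0"
  shows "length (run n k h v d J \<gamma>) = 2^n
    \<and> (\<forall>y < 2^k. run n k h v d J \<gamma> ! (h XOR combo k v y)
          = \<gamma> * \<i> ^ (\<Sum>t=1..k. of_bool (d t \<and> bit y (t - 1)))
              * (-1) ^ (\<Sum>i=1..k. \<Sum>j=1..k. of_bool (bit y (i - 1) \<and> J i j \<and> bit y (j - 1))))
    \<and> (\<forall>x < 2^n. (\<forall>y < 2^k. x \<noteq> h XOR combo k v y) \<longrightarrow> run n k h v d J \<gamma> ! x = 0)"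
proof -
  have tri: "\<forall>i\<in>{1..k}. \<forall>j\<le>k. 1 \<le> j \<longrightarrow> j < i \<longrightarrow> \<not> J i j" using assms(5) by auto
  define M where "M = 2^k - (1::nat)"
  have M: "M < 2^k" unfolding M_def by simp
  have up: "[1..<Suc M] = [1..<2^k]" unfolding M_def by simp
  obtain y0 x0 p0 q0 \<psi> where fs: "foldl (step (tableA k d J) (tableV k v) (tableC k J) \<gamma>)
           (0, h, 0, 0, (replicate (2^n) 0)[h := \<gamma>]) [1..<2^k] = (y0, x0, p0, q0, \<psi>)"
    by (cases "foldl (step (tableA k d J) (tableV k v) (tableC k J) \<gamma>)
           (0, h, 0, 0, (replicate (2^n) 0)[h := \<gamma>]) [1..<2^k]") auto
  have I: "invS n k h v d J \<gamma> M (y0, x0, p0, q0, \<psi>)"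
    using invS_loop[where d=d and \<gamma>=\<gamma>, OF assms(2,3,4) tri M] unfolding up fs .
  have run: "run n k h v d J \<gamma> = \<psi>" unfolding run_def Let_def fs by simp
  have len: "length \<psi> = 2^n"
    and old: "\<forall>j\<le>M. \<psi> ! (h XOR combo k v (gray j)) = \<gamma> * \<i> ^ Eq4 k d J (gray j)"
    and zero: "\<forall>x<2^n. (\<forall>j\<le>M. x \<noteq> h XOR combo k v (gray j)) \<longrightarrow> \<psi> ! x = 0"
    using I unfolding invS_def by auto
  have part2: "\<psi> ! (h XOR combo k v y)
          = \<gamma> * \<i> ^ (\<Sum>t=1..k. of_bool (d t \<and> bit y (t - 1)))
              * (-1) ^ (\<Sum>i=1..k. \<Sum>j=1..k. of_bool (bit y (i - 1) \<and> J i j \<and> bit y (j - 1)))"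
    if y: "y < 2^k" for y
  proof -
    obtain m where m: "m < 2^k" "gray m = y" using gray_surj[OF y] by blast
    then have "m \<le> M" unfolding M_def by simp
    then have "\<psi> ! (h XOR combo k v y) = \<gamma> * \<i> ^ Eq4 k d J y" using old m by auto
    also have "\<dots> = \<gamma> * \<i> ^ E1 k d y * (\<i>^2) ^ E2 k J y"
      unfolding Eq4_def by (simp add: power_add power_mult)
    finally show ?thesis unfolding E1_def E2_def by simp
  qed
  have part3: "\<psi> ! x = 0" if "x < 2^n" "\<forall>y < 2^k. x \<noteq> h XOR combo k v y" for x
  proof -
    have "\<forall>j\<le>M. x \<noteq> h XOR combo k v (gray j)"
      using that gray_less M by (metis le_less_trans less_le_not_le le_imp_less_Suc M_def)
    then show ?thesis using zero that by blast
  qed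
  show ?thesis unfolding run using len part2 part3 by blast
qed

end
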